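(* Every instance of Crossing Cost Multi-Agent Routing (CC-MAR) admits a (pure) Nash equilibrium. Moreover, any Nash dynamics (sequence of improving moves) starting from any strategy profile reaches a Nash equilibrium after at most $w_{\max}k^2|E|$ steps, where $w_{\max}$ is the maximum edge weight, $k$ the number of agents, and $|E|$ the number of undirected edges.
   Context: A mixed graph $G=(V,E,A)$ has a set $E\subseteq\binom{V}{2}$ of undirected edges and a set $A\subseteq V\times V$ of arcs; each edge $e\in E$ has a positive integer weight $w_e$. A path is a sequence of pairwise distinct vertices $v_1,\dots,v_m$ such that for each $i<m$ either $\{v_i,v_{i+1}\}\in E$ or $(v_i,v_{i+1})\in A$; it traverses an edge $\{v_i,v_{i+1}\}\in E$ in the direction from $v_i$ to $v_{i+1}$. A CC-MAR instance is $\Gamma=(G,\mathcal{T})$ where $\mathcal{T}$ is a multiset of $k$ pairs $(s_i,t_i)\in V\times V$ (agents $i\in[k]$); it is assumed that for each $i$ an $s_i$-$t_i$ path exists. A strategy profile is $\mathcal{P}=\{P_1,\dots,P_k\}$ with $P_i$ an $s_i$-$t_i$ path. For an edge $\{u,v\}\in E$ let $x_{uv}$ be the number of paths of $\mathcal{P}$ traversing it from $u$ to $v$. The individual cost of agent $i$ is $\mathrm{cost}_{\mathcal{P}}(P_i)=\sum w_{uv}x_{vu}$, summed over the edges $\{u,v\}\in E$ that $P_i$ traverses from $u$ to $v$ (i.e., the weighted number of other paths using that edge in the opposite direction). The total cost is $\mathrm{cost}(\mathcal{P})=\sum_{\{u,v\}\in E}w_{uv}x_{uv}x_{vu}$. A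 Nash equilibrium is a profile in which no agent can strictly decrease its individual cost by replacing its own path by another $s_i$-$t_i$ path while the others stay fixed. A Nash dynamics step replaces the path of some agent by one giving it strictly smaller individual cost. *)

theory Defs
  imports Main
begin

definition mixed_graph :: "'v set \<Rightarrow> 'v set set \<Rightarrow> ('v \<times> 'v) set \<Rightarrow> bool" where
  "mixed_graph V E A \<longleftrightarrow> finite V \<and> (\<forall>e\<in>E. e \<subseteq> V \<and> card e = 2) \<and> A \<subseteq> V \<times> V"

definition is_path :: "'v set \<Rightarrow> 'v set set \<Rightarrow> ('v \<times> 'v) set \<Rightarrow> 'v \<Rightarrow> 'v \<Rightarrow> 'v list \<Rightarrow> bool" where
  "is_path V E A s t p \<longleftrightarrow> p \<noteq> [] \<and> distinct p \<and> set p \<subseteq> V \<and> hd p = s \<and> last p = t \<and>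
     (\<forall>i. Suc i < length p \<longrightarrow> {p ! i, p ! Suc i} \<in> E \<or> (p ! i, p ! Suc i) \<in> A)"

definition traverses :: "'v set set \<Rightarrow> 'v list \<Rightarrow> 'v \<Rightarrow> 'v \<Rightarrow> bool" where
  "traverses E p u v \<longleftrightarrow> {u, v} \<in> E \<and> (\<exists>i. Suc i < length p \<and> p ! i = u \<and> p ! Suc i = v)"

definition flow :: "'v set set \<Rightarrow> nat \<Rightarrow> (nat \<Rightarrow> 'v list) \<Rightarrow> 'v \<Rightarrow> 'v \<Rightarrow> nat" where
  "flow E k P u v = card {j. j < k \<and> traverses E (P j) u v}"

definition valid_profile ::
  "'v set \<Rightarrow> 'v set set \<Rightarrow> ('v \<times> 'v) set \<Rightarrow> nat \<Rightarrow> (nat \<Rightarrow> 'v) \<Rightarrow> (nat \<Rightarrow> 'v) \<Rightarrow> (nat \<Rightarrow> 'v list) \<Rightarrow> bool" where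
  "valid_profile V E A k s t P \<longleftrightarrow> (\<forall>i<k. is_path V E A (s i) (t i) (P i))"

definition indiv_cost ::
  "'v set set \<Rightarrow> ('v set \<Rightarrow> nat) \<Rightarrow> nat \<Rightarrow> (nat \<Rightarrow> 'v list) \<Rightarrow> nat \<Rightarrow> nat" where
  "indiv_cost E w k P i =
     (\<Sum>j<length (P i) - 1.
        if {P i ! j, P i ! Suc j} \<in> E
        then w {P i ! j, P i ! Suc j} * flow E k P (P i ! Suc j) (P i ! j)
        else 0)"

definition improving_step ::
  "'v set \<Rightarrow> 'v set set \<Rightarrow> ('v \<times> 'v) set \<Rightarrow> ('v set \<Rightarrow> nat) \<Rightarrow> nat \<Rightarrow> (nat \<Rightarrow> 'v) \<Rightarrow> (nat \<Rightarrow> 'v)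
     \<Rightarrow> (nat \<Rightarrow> 'v list) \<Rightarrow> (nat \<Rightarrow> 'v list) \<Rightarrow> bool" where
  "improving_step V E A w k s t P P' \<longleftrightarrow>
     (\<exists>i<k. \<exists>Q. is_path V E A (s i) (t i) Q \<and> P' = P(i := Q) \<and>
        indiv_cost E w k P' i < indiv_cost E w k P i)"

definition nash_equilibrium ::
  "'v set \<Rightarrow> 'v set set \<Rightarrow> ('v \<times> 'v) set \<Rightarrow> ('v set \<Rightarrow> nat) \<Rightarrow> nat \<Rightarrow> (nat \<Rightarrow> 'v) \<Rightarrow> (nat \<Rightarrow> 'v)
     \<Rightarrow> (nat \<Rightarrow> 'v list) \<Rightarrow> bool" where
  "nash_equilibrium V E A w k s t P \<longleftrightarrow> valid_profile V E A k s t P \<and>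
     (\<forall>i<k. \<forall>Q. is_path V E A (s i) (t i) Q \<longrightarrow> indiv_cost E w k P i \<le> indiv_cost E w k (P(i := Q)) i)"

definition nash_dynamics ::
  "'v set \<Rightarrow> 'v set set \<Rightarrow> ('v \<times> 'v) set \<Rightarrow> ('v set \<Rightarrow> nat) \<Rightarrow> nat \<Rightarrow> (nat \<Rightarrow> 'v) \<Rightarrow> (nat \<Rightarrow> 'v)
     \<Rightarrow> (nat \<Rightarrow> nat \<Rightarrow> 'v list) \<Rightarrow> nat \<Rightarrow> bool" where
  "nash_dynamics V E A w k s t seq n \<longleftrightarrow> valid_profile V E A k s t (seq 0) \<and>
     (\<forall>m<n. improving_step V E A w k s t (seq m) (seq (Suc m)))"

definition w_max :: "'v set set \<Rightarrow> ('v set \<Rightarrow> nat) \<Rightarrow> nat" where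
  "w_max E w = (if E = {} then 0 else Max (w ` E))"

end

theory Submission
  imports Defs
begin

definition dirs :: "'v set set \<Rightarrow> ('v \<times> 'v) set" where
  "dirs E = {(u,v). {u,v} \<in> E}"

definition cnt :: "'v set set \<Rightarrow> 'v list \<Rightarrow> 'v \<Rightarrow> 'v \<Rightarrow> nat" where
  "cnt E p u v = (if traverses E p u v then 1 else 0)"

definition gflow :: "'v set set \<Rightarrow> nat \<Rightarrow> (nat \<Rightarrow> 'v list) \<Rightarrow> nat \<Rightarrow> 'v \<Rightarrow> 'v \<Rightarrow> nat" where
  "gflow E k P i u v = card {j. j < k \<and> j \<noteq> i \<and> traverses E (P j) u v}"

definition phi :: "'v set set \<Rightarrow> ('v set \<Rightarrow> nat) \<Rightarrow> nat \<Rightarrow> (nat \<Rightarrow> 'v list) \<Rightarrow> nat" where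
  "phi E w k P = (\<Sum>(u,v)\<in>dirs E. w {u,v} * flow E k P u v * flow E k P v u)"

definition gphi :: "'v set set \<Rightarrow> ('v set \<Rightarrow> nat) \<Rightarrow> nat \<Rightarrow> (nat \<Rightarrow> 'v list) \<Rightarrow> nat \<Rightarrow> nat" where
  "gphi E w k P i = (\<Sum>(u,v)\<in>dirs E. w {u,v} * gflow E k P i u v * gflow E k P i v u)"

lemma finite_dirs:
  assumes "mixed_graph V E A" shows "finite (dirs E)"
proof -
  have "dirs E \<subseteq> V \<times> V" using assms unfolding mixed_graph_def dirs_def by auto
  moreover have "finite V" using assms unfolding mixed_graph_def by auto
  ultimately show ?thesis by (meson finite_SigmaI finite_subset)
qed

lemma flow_split:
  assumes "i < k"
  shows "flow E k P u v = gflow E k P i u v + cnt E (P i) u v"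
proof (cases "traverses E (P i) u v")
  case True
  have "{j. j < k \<and> traverses E (P j) u v} = insert i {j. j < k \<and> j \<noteq> i \<and> traverses E (P j) u v}"
    using True assms by auto
  then show ?thesis unfolding flow_def gflow_def cnt_def using True by simp
next
  case False
  have "{j. j < k \<and> traverses E (P j) u v} = {j. j < k \<and> j \<noteq> i \<and> traverses E (P j) u v}"
    using False assms by auto
  then show ?thesis unfolding flow_def gflow_def cnt_def using False by simp
qed

lemma gflow_upd: "gflow E k (P(i := Q)) i = gflow E k P i"
  unfolding gflow_def by (intro ext arg_cong[where f=card]) auto

lemma gphi_upd: "gphi E w k (P(i := Q)) i = gphi E w k P i"
  unfolding gphi_def gflow_upd ..

lemma no_both:
  assumes "distinct p" "traverses E p u v" "traverses E p v u"
  shows False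
proof -
  obtain a where a: "Suc a < length p" "p ! a = u" "p ! Suc a = v" using assms(2) unfolding traverses_def by auto
  obtain b where b: "Suc b < length p" "p ! b = v" "p ! Suc b = u" using assms(3) unfolding traverses_def by auto
  have "a = Suc b" using a b assms(1) nth_eq_iff_index_eq by (metis Suc_lessD)
  moreover have "Suc a = b" using a b assms(1) nth_eq_iff_index_eq by (metis Suc_lessD)
  ultimately show False by simp
qed

lemma list_sum:
  assumes "distinct p" "finite (dirs E)"
  shows "(\<Sum>j<length p - 1. if {p!j, p!Suc j} \<in> E then h (p!j) (p!Suc j) else 0)
       = (\<Sum>(u,v)\<in>dirs E. if traverses E p u v then h u v else (0::nat))"
proof -
  define J where "J = {j. j < length p - 1 \<and> {p!j, p!Suc j} \<in> E}"
  define S where "S = {x \<in> dirs E. traverses E p (fst x) (snd x)}"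
  have L: "(\<Sum>j<length p - 1. if {p!j, p!Suc j} \<in> E then h (p!j) (p!Suc j) else 0)
      = (\<Sum>j\<in>J. h (p!j) (p!Suc j))"
    unfolding J_def by (simp add: sum.inter_filter[symmetric] lessThan_def)
  have R: "(\<Sum>(u,v)\<in>dirs E. if traverses E p u v then h u v else (0::nat)) = (\<Sum>(u,v)\<in>S. h u v)"
    unfolding S_def using assms(2)
    by (simp add: sum.inter_filter[symmetric] case_prod_beta if_distrib cong: if_cong)
  have SJ: "S = (\<lambda>j. (p!j, p!Suc j)) ` J"
  proof
    show "S \<subseteq> (\<lambda>j. (p!j, p!Suc j)) ` J"
    proof
      fix x assume "x \<in> S"
      then obtain i where "Suc i < length p" "p ! i = fst x" "p ! Suc i = snd x" "{fst x, snd x} \<in> E"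
        unfolding S_def traverses_def by auto
      then have "i \<in> J" "x = (p!i, p!Suc i)" unfolding J_def by auto
      then show "x \<in> (\<lambda>j. (p!j, p!Suc j)) ` J" by blast
    qed
    show "(\<lambda>j. (p!j, p!Suc j)) ` J \<subseteq> S"
      unfolding S_def J_def dirs_def traverses_def apply clarsimp subgoal for x by (rule exI[of _ x]) simp done
  qed
  have inj: "inj_on (\<lambda>j. (p!j, p!Suc j)) J"
    unfolding inj_on_def J_def using assms(1) nth_eq_iff_index_eq by fastforce
  show ?thesis unfolding L R SJ using sum.reindex[OF inj, of "\<lambda>(u,v). h u v"] by simp
qed

lemma sum_swap_dirs:
  "(\<Sum>(u,v)\<in>dirs E. f u v) = (\<Sum>(u,v)\<in>dirs E. f v u)"
proof -
  have e: "prod.swap ` dirs E = dirs E" 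
    unfolding dirs_def by (auto simp: insert_commute image_iff)
  have "(\<Sum>(u,v)\<in>dirs E. f v u) = (\<Sum>x\<in>prod.swap ` dirs E. (\<lambda>(u,v). f u v) x)"
    by (subst sum.reindex) (auto simp: case_prod_beta)
  then show ?thesis using e by simp
qed

lemma cost_eq:
  assumes "distinct (P i)" "i < k" "finite (dirs E)"
  shows "indiv_cost E w k P i = (\<Sum>(u,v)\<in>dirs E. w {u,v} * cnt E (P i) u v * gflow E k P i v u)"
proof -
  have "indiv_cost E w k P i = (\<Sum>(u,v)\<in>dirs E. if traverses E (P i) u v then w {u,v} * flow E k P v u else 0)"
    unfolding indiv_cost_def using list_sum[OF assms(1) assms(3), of "\<lambda>u v. w {u,v} * flow E k P v u"] by simp
  also have "\<dots> = (\<Sum>(u,v)\<in>dirs E. w {u,v} * cnt E (P i) u v * gflow E k P i v u)"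
  proof (rule sum.cong, simp)
    fix x assume "x \<in> dirs E"
    obtain u v where x: "x = (u,v)" by fastforce
    show "(case x of (u, v) \<Rightarrow> if traverses E (P i) u v then w {u, v} * flow E k P v u else 0) =
         (case x of (u, v) \<Rightarrow> w {u, v} * cnt E (P i) u v * gflow E k P i v u)"
      using flow_split[OF assms(2), of E P v u] no_both[OF assms(1), of E u v]
      unfolding x cnt_def by auto
  qed
  finally show ?thesis .
qed

lemma phi_eq:
  assumes "distinct (P i)" "i < k" "finite (dirs E)"
  shows "phi E w k P = gphi E w k P i + 2 * indiv_cost E w k P i"
proof -
  let ?g = "gflow E k P i" and ?c = "cnt E (P i)"
  have cc: "?c u v * ?c v u = 0" for u v
    using no_both[OF assms(1), of E u v] unfolding cnt_def by auto
  have "phi E w k P = (\<Sum>(u,v)\<in>dirs E. w {u,v} * (?g u v + ?c u v) * (?g v u + ?c v u))"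
    unfolding phi_def by (simp only: flow_split[OF assms(2)])
  also have "\<dots> = (\<Sum>(u,v)\<in>dirs E. w {u,v} * ?g u v * ?g v u + w {u,v} * ?c u v * ?g v u
        + w {u,v} * ?g u v * ?c v u)"
  proof (rule sum.cong, simp)
    fix x assume "x \<in> dirs E"
    obtain u v where x: "x = (u,v)" by fastforce
    have e: "W * (a + b) * (c + d) = W * a * c + W * b * c + W * a * d + W * (b * d)" for W a b c d :: nat
      by (simp add: algebra_simps)
    show "(case x of (u, v) \<Rightarrow> w {u,v} * (?g u v + ?c u v) * (?g v u + ?c v u)) =
      (case x of (u, v) \<Rightarrow> w {u,v} * ?g u v * ?g v u + w {u,v} * ?c u v * ?g v u + w {u,v} * ?g u v * ?c v u)"
      unfolding x using e[of "w {u,v}" "?g u v" "?c u v" "?g v u" "?c v u"] cc[of u v] by simp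
  qed
  also have "\<dots> = gphi E w k P i + (\<Sum>(u,v)\<in>dirs E. w {u,v} * ?c u v * ?g v u)
        + (\<Sum>(u,v)\<in>dirs E. w {u,v} * ?g u v * ?c v u)"
    unfolding gphi_def by (simp add: sum.distrib case_prod_beta)
  also have "(\<Sum>(u,v)\<in>dirs E. w {u,v} * ?g u v * ?c v u) = (\<Sum>(u,v)\<in>dirs E. w {v,u} * ?g v u * ?c u v)"
    by (rule sum_swap_dirs)
  also have "\<dots> = (\<Sum>(u,v)\<in>dirs E. w {u,v} * ?c u v * ?g v u)"
    by (simp add: insert_commute mult.commute mult.left_commute)
  finally show ?thesis using cost_eq[of P i k E w, OF assms] by simp
qed


lemma step_dec:
  assumes mg: "mixed_graph V E A" and v: "valid_profile V E A k s t P"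
    and st: "improving_step V E A w k s t P P'"
  shows "valid_profile V E A k s t P' \<and> phi E w k P' + 2 \<le> phi E w k P"
proof -
  obtain i Q where i: "i < k" "is_path V E A (s i) (t i) Q" "P' = P(i := Q)"
    "indiv_cost E w k P' i < indiv_cost E w k P i"
    using st unfolding improving_step_def by blast
  have v': "valid_profile V E A k s t P'" using v i unfolding valid_profile_def by auto
  have fd: "finite (dirs E)" using finite_dirs[OF mg] .
  have d: "distinct (P i)" using v i(1) unfolding valid_profile_def is_path_def by auto
  have d': "distinct (P' i)" using v' i(1) unfolding valid_profile_def is_path_def by auto
  have "phi E w k P = gphi E w k P i + 2 * indiv_cost E w k P i" using phi_eq[of P i k E w, OF d i(1) fd] .
  moreover have "phi E w k P' = gphi E w k P' i + 2 * indiv_cost E w k P' i" using phi_eq[of P' i k E w, OF d' i(1) fd] .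
  moreover have "gphi E w k P' i = gphi E w k P i" using i(3) gphi_upd by simp
  ultimately show ?thesis using v' i(4) by simp
qed

lemma phi_bound:
  assumes mg: "mixed_graph V E A"
  shows "phi E w k P \<le> 2 * card E * (w_max E w * k * k)"
proof -
  have "E \<subseteq> Pow V" "finite V" using mg unfolding mixed_graph_def by auto
  then have fE: "finite E" by (meson finite_Pow_iff finite_subset)
  have fd: "finite (dirs E)" using finite_dirs[OF mg] .
  have fl: "flow E k P u v \<le> k" for u v
  proof -
    have "{j. j < k \<and> traverses E (P j) u v} \<subseteq> {..<k}" by auto
    then show ?thesis unfolding flow_def by (metis card_lessThan card_mono finite_lessThan)
  qed
  have wm: "w {u,v} \<le> w_max E w" if "{u,v} \<in> E" for u v
    using that fE unfolding w_max_def by auto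
  have "phi E w k P \<le> (\<Sum>(u,v)\<in>dirs E. w_max E w * k * k)"
    unfolding phi_def
  proof (rule sum_mono)
    fix x assume "x \<in> dirs E"
    then obtain u v where x: "x = (u,v)" "{u,v} \<in> E" unfolding dirs_def by auto
    show "(case x of (u, v) \<Rightarrow> w {u, v} * flow E k P u v * flow E k P v u) \<le> (case x of (u, v) \<Rightarrow> w_max E w * k * k)"
      unfolding x(1) using wm[OF x(2)] fl[of u v] fl[of v u] by (simp add: mult_le_mono)
  qed
  also have "\<dots> = card (dirs E) * (w_max E w * k * k)" by simp
  also have "card (dirs E) \<le> 2 * card E"
  proof -
    have sub: "dirs E \<subseteq> (\<Union>e\<in>E. {(u,v). {u,v} = e})" unfolding dirs_def by auto
    have c2: "card {(u,v). {u,v} = e} \<le> 2 \<and> finite {(u,v). {u,v} = e}" if "e \<in> E" for e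
    proof -
      have "card e = 2" using that mg unfolding mixed_graph_def by auto
      then obtain a b where e: "e = {a,b}" by (auto simp: card_2_iff)
      have sb: "{(u,v). {u,v} = e} \<subseteq> {(a,b),(b,a)}" unfolding e by (auto simp: doubleton_eq_iff)
      then have "card {(u,v). {u,v} = e} \<le> card {(a,b),(b,a)}" by (meson card_mono finite.emptyI finite.insertI)
      also have "\<dots> \<le> 2" by (simp add: card_insert_le_m1)
      finally show ?thesis using sb finite_subset by blast
    qed
    have fU: "finite (\<Union>e\<in>E. {(u,v). {u,v} = e})"
      using fE c2 by (intro finite_UN_I) auto
    have "card (dirs E) \<le> card (\<Union>e\<in>E. {(u,v). {u,v} = e})" using card_mono[OF _ sub] fU by blast
    also have "\<dots> \<le> (\<Sum>e\<in>E. card {(u,v). {u,v} = e})" by (rule card_UN_le[OF fE])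
    also have "\<dots> \<le> (\<Sum>e\<in>E. 2)" using c2 by (intro sum_mono) auto
    finally show ?thesis by simp
  qed
  then have "card (dirs E) * (w_max E w * k * k) \<le> 2 * card E * (w_max E w * k * k)" by simp
  finally show ?thesis .
qed

lemma dyn_bound:
  assumes mg: "mixed_graph V E A" and dy: "nash_dynamics V E A w k s t seq n"
  shows "m \<le> n \<Longrightarrow> valid_profile V E A k s t (seq m) \<and> phi E w k (seq m) + 2 * m \<le> phi E w k (seq 0)"
proof (induction m)
  case 0
  then show ?case using dy unfolding nash_dynamics_def by simp
next
  case (Suc m)
  then have "valid_profile V E A k s t (seq m)" "phi E w k (seq m) + 2 * m \<le> phi E w k (seq 0)" by auto
  moreover have "improving_step V E A w k s t (seq m) (seq (Suc m))" using dy Suc.prems unfolding nash_dynamics_def by auto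
  ultimately show ?case using step_dec[OF mg, of k s t "seq m" w "seq (Suc m)"] by simp
qed

lemma reach_ne:
  assumes mg: "mixed_graph V E A"
  shows "\<forall>P. valid_profile V E A k s t P \<and> phi E w k P = N \<longrightarrow>
     (\<exists>seq n. seq 0 = P \<and> nash_dynamics V E A w k s t seq n \<and> nash_equilibrium V E A w k s t (seq n))"
proof (induction N rule: less_induct)
  case (less N)
  show ?case
  proof (intro allI impI)
    fix P assume P: "valid_profile V E A k s t P \<and> phi E w k P = N"
    show "\<exists>seq n. seq 0 = P \<and> nash_dynamics V E A w k s t seq n \<and> nash_equilibrium V E A w k s t (seq n)"
    proof (cases "nash_equilibrium V E A w k s t P")
      case True
      then show ?thesis using P by (intro exI[of _ "\<lambda>_. P"] exI[of _ 0]) (simp add: nash_dynamics_def)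
    next
      case False
      then obtain i Q where iQ: "i < k" "is_path V E A (s i) (t i) Q"
        "indiv_cost E w k (P(i := Q)) i < indiv_cost E w k P i"
        using P unfolding nash_equilibrium_def by (auto simp: not_le)
      have st: "improving_step V E A w k s t P (P(i := Q))"
        unfolding improving_step_def using iQ by blast
      from step_dec[OF mg _ st] P have "valid_profile V E A k s t (P(i:=Q))" "phi E w k (P(i:=Q)) < N" by auto
      then obtain seq n where sq: "seq 0 = P(i:=Q)" "nash_dynamics V E A w k s t seq n"
        "nash_equilibrium V E A w k s t (seq n)" using less by blast
      define seq' where "seq' = (\<lambda>m. if m = 0 then P else seq (m - 1))"
      have "nash_dynamics V E A w k s t seq' (Suc n)"
        unfolding nash_dynamics_def
      proof (intro conjI allI impI)
        show "valid_profile V E A k s t (seq' 0)" using P seq'_def by simp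
        fix m assume "m < Suc n"
        show "improving_step V E A w k s t (seq' m) (seq' (Suc m))"
        proof (cases m)
          case 0 then show ?thesis using st sq(1) seq'_def by simp
        next
          case (Suc m') then show ?thesis using sq(2) \<open>m < Suc n\<close> seq'_def
            unfolding nash_dynamics_def by simp
        qed
      qed
      then show ?thesis using sq(3) seq'_def by (intro exI[of _ seq'] exI[of _ "Suc n"]) simp
    qed
  qed
qed

theorem mainTheorem1:
  fixes V :: "'v set" and E :: "'v set set" and A :: "('v \<times> 'v) set"
    and w :: "'v set \<Rightarrow> nat" and k :: nat and s t :: "nat \<Rightarrow> 'v"
  assumes "mixed_graph V E A"
    and "\<forall>e\<in>E. w e > 0"
    and "\<forall>i<k. \<exists>p. is_path V E A (s i) (t i) p"
  shows "(\<exists>P. nash_equilibrium V E A w k s t P) \<and>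
    (\<forall>seq n. nash_dynamics V E A w k s t seq n \<longrightarrow> n \<le> w_max E w * k^2 * card E) \<and>
    (\<forall>P0. valid_profile V E A k s t P0 \<longrightarrow>
       (\<exists>seq n. seq 0 = P0 \<and> nash_dynamics V E A w k s t seq n \<and>
          nash_equilibrium V E A w k s t (seq n)))"
proof (intro conjI allI impI)
  fix P0 assume "valid_profile V E A k s t P0"
  then show "\<exists>seq n. seq 0 = P0 \<and> nash_dynamics V E A w k s t seq n \<and> nash_equilibrium V E A w k s t (seq n)"
    using reach_ne[OF assms(1)] by blast
next
  fix seq n assume d: "nash_dynamics V E A w k s t seq n"
  have "phi E w k (seq n) + 2 * n \<le> phi E w k (seq 0)" using dyn_bound[OF assms(1) d, of n] by simp
  moreover have "phi E w k (seq 0) \<le> 2 * card E * (w_max E w * k * k)" by (rule phi_bound[OF assms(1)])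
  ultimately have "2 * n \<le> 2 * (w_max E w * k^2 * card E)" by (simp add: power2_eq_square algebra_simps)
  then show "n \<le> w_max E w * k^2 * card E" by simp
next
  define P0 where "P0 = (\<lambda>i. SOME p. is_path V E A (s i) (t i) p)"
  have "valid_profile V E A k s t P0" unfolding valid_profile_def P0_def
    using assms(3) by (auto intro: someI_ex)
  then show "\<exists>P. nash_equilibrium V E A w k s t P" using reach_ne[OF assms(1)] by blast
qed

end
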